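(* Let $\beta>0$, let $E_0,\dots,E_{d-1}$ be energy levels, and let $\mathbf{p}$ be a probability vector on these levels with $\beta$-order $\pi$. For any ordering $\alpha$ of the levels, let $\mathbf{p}^\alpha=P^{(\pi,\alpha)}\mathbf{p}$. Then $\mathbf{p}^\alpha$ has $\beta$-order $\alpha$, and it is maximal in the sense that there is no probability vector $\mathbf{q}\neq\mathbf{p}^\alpha$ with $\beta$-order $\alpha$ such that $\mathbf{p}\succeq_{\rm th}\mathbf{q}\succeq_{\rm th}\mathbf{p}^\alpha$.
   Context: $\beta$-order: a permutation $\pi$ of $\{0,\dots,d-1\}$ such that $p_{\pi(0)}e^{\beta E_{\pi(0)}}\ge p_{\pi(1)}e^{\beta E_{\pi(1)}}\ge\dots$. Thermo-majorization: the thermo-majorization curve of $\mathbf{p}$ with $\beta$-order $\pi$ is the piecewise linear curve joining $(0,0)$ and the points $\big(\sum_{i=0}^k e^{-\beta E_{\pi(i)}},\sum_{i=0}^k p_{\pi(i)}\big)$, $k=0,\dots,d-1$; $\mathbf{p}\succeq_{\rm th}\mathbf{p}'$ means the curve of $\mathbf{p}$ is never below that of $\mathbf{p}'$. $\beta$-permutation matrix: set $g_m=e^{-\beta E_m}$, $X_m=\sum_{i<m}g_{\alpha(i)}$, $Y_j=\sum_{l<j}g_{\pi(l)}$, and define the $d\times d$ matrix $P^{(\pi,\alpha)}$ by $P^{(\pi,\alpha)}_{\alpha(m)|\pi(j)}=\max\{0,\min(X_{m+1},Y_{j+1})-\max(X_m,Y_j)\}/g_{\pi(j)}$ (entry in row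 $\alpha(m)$, column $\pi(j)$), acting on column probability vectors. *)

theory Defs
  imports Complex_Main
begin

text \<open>Levels are indexed by 0..d-1; vectors and energies are functions nat => real,
  only the values at indices < d matter. Orderings are bijections of {..<d}.\<close>

definition gibbs_w :: "(nat \<Rightarrow> real) \<Rightarrow> real \<Rightarrow> nat \<Rightarrow> real" where
  "gibbs_w E \<beta> m = exp (- \<beta> * E m)"

definition is_perm :: "nat \<Rightarrow> (nat \<Rightarrow> nat) \<Rightarrow> bool" where
  "is_perm d \<sigma> \<longleftrightarrow> bij_betw \<sigma> {..<d} {..<d}"

definition prob_vec :: "nat \<Rightarrow> (nat \<Rightarrow> real) \<Rightarrow> bool" where
  "prob_vec d p \<longleftrightarrow> (\<forall>i<d. 0 \<le> p i) \<and> (\<Sum>i<d. p i) = 1"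

definition is_beta_order :: "nat \<Rightarrow> (nat \<Rightarrow> real) \<Rightarrow> real \<Rightarrow> (nat \<Rightarrow> real) \<Rightarrow> (nat \<Rightarrow> nat) \<Rightarrow> bool" where
  "is_beta_order d E \<beta> p \<pi> \<longleftrightarrow> is_perm d \<pi> \<and>
     (\<forall>i. Suc i < d \<longrightarrow> p (\<pi> i) * exp (\<beta> * E (\<pi> i)) \<ge> p (\<pi> (Suc i)) * exp (\<beta> * E (\<pi> (Suc i))))"

definition cumw :: "(nat \<Rightarrow> real) \<Rightarrow> real \<Rightarrow> (nat \<Rightarrow> nat) \<Rightarrow> nat \<Rightarrow> real" where
  "cumw E \<beta> \<sigma> k = (\<Sum>i<k. gibbs_w E \<beta> (\<sigma> i))"

text \<open>Thermo-majorization curve of p w.r.t. the beta-order sigma: the piecewise linear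
  curve through (0,0) and (cumw (k+1), sum_{i<=k} p(sigma i)). On the k-th segment
  [cumw k, cumw (k+1)] it has slope p(sigma k)/g(sigma k); written in closed form as a
  sum of clamped linear pieces (g > 0).\<close>
definition th_curve :: "nat \<Rightarrow> (nat \<Rightarrow> real) \<Rightarrow> real \<Rightarrow> (nat \<Rightarrow> real) \<Rightarrow> (nat \<Rightarrow> nat) \<Rightarrow> real \<Rightarrow> real" where
  "th_curve d E \<beta> p \<sigma> x =
     (\<Sum>k<d. p (\<sigma> k) *
        max 0 (min 1 ((x - cumw E \<beta> \<sigma> k) / gibbs_w E \<beta> (\<sigma> k))))"

text \<open>p thermo-majorizes p': the curve of p is never below that of p' on [0, Z]
  (curves taken w.r.t. any beta-orders of p and p'; they do not depend on the choice).\<close>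
definition th_majorizes :: "nat \<Rightarrow> (nat \<Rightarrow> real) \<Rightarrow> real \<Rightarrow> (nat \<Rightarrow> real) \<Rightarrow> (nat \<Rightarrow> real) \<Rightarrow> bool" where
  "th_majorizes d E \<beta> p p' \<longleftrightarrow>
     (\<forall>\<sigma> \<tau>. is_beta_order d E \<beta> p \<sigma> \<longrightarrow> is_beta_order d E \<beta> p' \<tau> \<longrightarrow>
        (\<forall>x. 0 \<le> x \<and> x \<le> (\<Sum>i<d. gibbs_w E \<beta> i) \<longrightarrow> th_curve d E \<beta> p' \<tau> x \<le> th_curve d E \<beta> p \<sigma> x))"

definition beta_perm_matrix :: "nat \<Rightarrow> (nat \<Rightarrow> real) \<Rightarrow> real \<Rightarrow> (nat \<Rightarrow> nat) \<Rightarrow> (nat \<Rightarrow> nat) \<Rightarrow> nat \<Rightarrow> nat \<Rightarrow> real" where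
  "beta_perm_matrix d E \<beta> \<pi> \<alpha> r c =
     (let m = inv_into {..<d} \<alpha> r; j = inv_into {..<d} \<pi> c;
          X = cumw E \<beta> \<alpha>; Y = cumw E \<beta> \<pi>
      in max 0 (min (X (Suc m)) (Y (Suc j)) - max (X m) (Y j)) / gibbs_w E \<beta> (\<pi> j))"

definition mat_apply :: "nat \<Rightarrow> (nat \<Rightarrow> nat \<Rightarrow> real) \<Rightarrow> (nat \<Rightarrow> real) \<Rightarrow> nat \<Rightarrow> real" where
  "mat_apply d M p r = (\<Sum>c<d. M r c * p c)"

end

theory Submission
  imports Defs
begin

lemma g_pos: "gibbs_w E \<beta> m > 0"
  by (simp add: gibbs_w_def)

lemma cumw_0: "cumw E \<beta> \<sigma> 0 = 0"
  by (simp add: cumw_def)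

lemma cumw_Suc: "cumw E \<beta> \<sigma> (Suc k) = cumw E \<beta> \<sigma> k + gibbs_w E \<beta> (\<sigma> k)"
  by (simp add: cumw_def)

lemma cumw_mono: "k \<le> m \<Longrightarrow> cumw E \<beta> \<sigma> k \<le> cumw E \<beta> \<sigma> m"
  unfolding cumw_def
  by (rule sum_mono2) (auto intro: less_imp_le[OF g_pos])

lemma cumw_nonneg: "0 \<le> cumw E \<beta> \<sigma> k"
  using cumw_mono[of 0 k] by (simp add: cumw_0)

lemma cumw_full: "is_perm d \<sigma> \<Longrightarrow> cumw E \<beta> \<sigma> d = (\<Sum>i<d. gibbs_w E \<beta> i)"
  unfolding cumw_def is_perm_def
  by (rule sum.reindex_bij_betw)

definition ov :: "real \<Rightarrow> real \<Rightarrow> real \<Rightarrow> real \<Rightarrow> real" where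
  "ov a b c e = max 0 (min b e - max a c)"

lemma ov_nonneg: "ov a b c e \<ge> 0" by (simp add: ov_def)

lemma ov_add: "a \<le> b \<Longrightarrow> b \<le> f \<Longrightarrow> c \<le> e \<Longrightarrow> ov a b c e + ov b f c e = ov a f c e"
  unfolding ov_def by (simp add: max_def min_def)

lemma ov_sym: "ov a b c e = ov c e a b"
  unfolding ov_def by (simp add: min.commute max.commute)

lemma ov_sum:
  assumes "\<And>k. F k \<le> F (Suc k)" "c \<le> e"
  shows "(\<Sum>k<m. ov (F k) (F (Suc k)) c e) = ov (F 0) (F m) c e"
proof (induction m)
  case 0
  then show ?case by (simp add: ov_def)
next
  case (Suc m)
  have "incseq F" using assms(1) by (rule incseq_SucI)
  then have "F 0 \<le> F m" by (simp add: incseq_def)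
  then show ?case using Suc ov_add[of "F 0" "F m" "F (Suc m)" c e] assms by simp
qed

lemma clamp_aux:
  fixes g x y :: real
  assumes "g > 0" "y \<ge> 0"
  shows "g * max 0 (min 1 ((x - y)/g)) = max 0 (min x (y+g) - max 0 y)"
proof -
  have "g * max 0 (min 1 ((x - y)/g)) = max 0 (min g (x - y))"
  proof (cases "x \<le> y")
    case True
    then have "x - y \<le> 0" by simp
    then have "(x - y)/g \<le> 0" using assms by (simp add: divide_nonpos_pos)
    then show ?thesis using True by simp
  next
    case False
    show ?thesis
    proof (cases "x - y \<le> g")
      case True
      then have "(x - y)/g \<le> 1" using assms by simp
      moreover have "(x - y)/g \<ge> 0" using False assms by simp
      ultimately show ?thesis using True False assms by simp
    next
      case c2: False
      then have "(x - y)/g \<ge> 1" using assms by simp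
      then show ?thesis using c2 assms by simp
    qed
  qed
  then show ?thesis using assms by (simp add: max_def min_def)
qed

lemma curve_break:
  assumes "is_perm d \<sigma>" "m \<le> d"
  shows "th_curve d E \<beta> q \<sigma> (cumw E \<beta> \<sigma> m) = (\<Sum>k<m. q (\<sigma> k))"
proof -
  have "th_curve d E \<beta> q \<sigma> (cumw E \<beta> \<sigma> m) = (\<Sum>k<d. if k < m then q (\<sigma> k) else 0)"
    unfolding th_curve_def
  proof (rule sum.cong)
    fix k assume "k \<in> {..<d}"
    have gp: "gibbs_w E \<beta> (\<sigma> k) > 0" by (rule g_pos)
    show "q (\<sigma> k) * max 0 (min 1 ((cumw E \<beta> \<sigma> m - cumw E \<beta> \<sigma> k) / gibbs_w E \<beta> (\<sigma> k)))
          = (if k < m then q (\<sigma> k) else 0)"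
    proof (cases "k < m")
      case True
      then have "cumw E \<beta> \<sigma> (Suc k) \<le> cumw E \<beta> \<sigma> m" by (intro cumw_mono) simp
      then have "cumw E \<beta> \<sigma> m - cumw E \<beta> \<sigma> k \<ge> gibbs_w E \<beta> (\<sigma> k)"
        by (simp add: cumw_Suc)
      then have "(cumw E \<beta> \<sigma> m - cumw E \<beta> \<sigma> k) / gibbs_w E \<beta> (\<sigma> k) \<ge> 1"
        using gp by (simp add: le_divide_eq)
      then show ?thesis using True by simp
    next
      case False
      then have "cumw E \<beta> \<sigma> m \<le> cumw E \<beta> \<sigma> k" by (intro cumw_mono) simp
      then have "(cumw E \<beta> \<sigma> m - cumw E \<beta> \<sigma> k) / gibbs_w E \<beta> (\<sigma> k) \<le> 0"
        using gp by (simp add: divide_le_0_iff)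
      then show ?thesis using False by simp
    qed
  qed simp
  also have "\<dots> = (\<Sum>k\<in>{..<d} \<inter> {k. k < m}. q (\<sigma> k))"
    by (simp add: sum.inter_restrict)
  also have "{..<d} \<inter> {k. k < m} = {..<m}" using assms(2) by auto
  finally show ?thesis .
qed

context
  fixes d :: nat and E :: "nat \<Rightarrow> real" and \<beta> :: real
    and p :: "nat \<Rightarrow> real" and \<pi> \<alpha> :: "nat \<Rightarrow> nat"
  assumes bo: "is_beta_order d E \<beta> p \<pi>"
    and aperm: "is_perm d \<alpha>"
begin

abbreviation "s j \<equiv> p (\<pi> j) * exp (\<beta> * E (\<pi> j))"
abbreviation "pa \<equiv> mat_apply d (beta_perm_matrix d E \<beta> \<pi> \<alpha>) p"

lemma pperm: "is_perm d \<pi>" using bo by (simp add: is_beta_order_def)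

lemma L1:
  assumes "m < d" "j < d"
  shows "beta_perm_matrix d E \<beta> \<pi> \<alpha> (\<alpha> m) (\<pi> j)
     = ov (cumw E \<beta> \<alpha> m) (cumw E \<beta> \<alpha> (Suc m)) (cumw E \<beta> \<pi> j) (cumw E \<beta> \<pi> (Suc j)) / gibbs_w E \<beta> (\<pi> j)"
proof -
  have "inv_into {..<d} \<alpha> (\<alpha> m) = m"
    using aperm assms by (auto simp: is_perm_def bij_betw_def intro: inv_into_f_f)
  moreover have "inv_into {..<d} \<pi> (\<pi> j) = j"
    using pperm assms by (auto simp: is_perm_def bij_betw_def intro: inv_into_f_f)
  ultimately show ?thesis
    unfolding beta_perm_matrix_def Let_def ov_def by simp
qed

lemma L2:
  assumes "m < d"
  shows "pa (\<alpha> m) = (\<Sum>j<d. ov (cumw E \<beta> \<alpha> m) (cumw E \<beta> \<alpha> (Suc m)) (cumw E \<beta> \<pi> j) (cumw E \<beta> \<pi> (Suc j)) * s j)"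
proof -
  have "pa (\<alpha> m) = (\<Sum>j<d. beta_perm_matrix d E \<beta> \<pi> \<alpha> (\<alpha> m) (\<pi> j) * p (\<pi> j))"
    unfolding mat_apply_def
    using sum.reindex_bij_betw[OF pperm[unfolded is_perm_def],
        of "\<lambda>c. beta_perm_matrix d E \<beta> \<pi> \<alpha> (\<alpha> m) c * p c"] by simp
  also have "\<dots> = (\<Sum>j<d. ov (cumw E \<beta> \<alpha> m) (cumw E \<beta> \<alpha> (Suc m)) (cumw E \<beta> \<pi> j) (cumw E \<beta> \<pi> (Suc j)) * s j)"
  proof (rule sum.cong)
    fix j assume "j \<in> {..<d}"
    then show "beta_perm_matrix d E \<beta> \<pi> \<alpha> (\<alpha> m) (\<pi> j) * p (\<pi> j)
        = ov (cumw E \<beta> \<alpha> m) (cumw E \<beta> \<alpha> (Suc m)) (cumw E \<beta> \<pi> j) (cumw E \<beta> \<pi> (Suc j)) * s j"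
      using assms by (simp add: L1 gibbs_w_def exp_minus divide_inverse)
  qed simp
  finally show ?thesis .
qed

lemma L3:
  assumes "0 \<le> x"
  shows "th_curve d E \<beta> p \<pi> x = (\<Sum>j<d. s j * ov 0 x (cumw E \<beta> \<pi> j) (cumw E \<beta> \<pi> (Suc j)))"
  unfolding th_curve_def
proof (rule sum.cong)
  fix j assume "j \<in> {..<d}"
  have gp: "gibbs_w E \<beta> (\<pi> j) > 0" by (rule g_pos)
  have e: "p (\<pi> j) = s j * gibbs_w E \<beta> (\<pi> j)"
    by (simp add: gibbs_w_def mult.assoc flip: exp_add)
  have "p (\<pi> j) * max 0 (min 1 ((x - cumw E \<beta> \<pi> j) / gibbs_w E \<beta> (\<pi> j)))
      = s j * (gibbs_w E \<beta> (\<pi> j) * max 0 (min 1 ((x - cumw E \<beta> \<pi> j) / gibbs_w E \<beta> (\<pi> j))))"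
    by (subst e) simp
  also have "\<dots> = s j * ov 0 x (cumw E \<beta> \<pi> j) (cumw E \<beta> \<pi> (Suc j))"
    using clamp_aux[OF gp cumw_nonneg, of x E \<beta> \<pi> j]
    by (simp add: ov_def cumw_Suc max.commute)
  finally show "p (\<pi> j) * max 0 (min 1 ((x - cumw E \<beta> \<pi> j) / gibbs_w E \<beta> (\<pi> j)))
      = s j * ov 0 x (cumw E \<beta> \<pi> j) (cumw E \<beta> \<pi> (Suc j))" .
qed simp

lemma Xinc: "cumw E \<beta> \<alpha> k \<le> cumw E \<beta> \<alpha> (Suc k)" by (rule cumw_mono) simp
lemma Yinc: "cumw E \<beta> \<pi> k \<le> cumw E \<beta> \<pi> (Suc k)" by (rule cumw_mono) simp

lemma L5:
  assumes "m \<le> d"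
  shows "th_curve d E \<beta> p \<pi> (cumw E \<beta> \<alpha> m) = (\<Sum>k<m. pa (\<alpha> k))"
proof -
  have "(\<Sum>k<m. pa (\<alpha> k)) = (\<Sum>k<m. \<Sum>j<d. ov (cumw E \<beta> \<alpha> k) (cumw E \<beta> \<alpha> (Suc k)) (cumw E \<beta> \<pi> j) (cumw E \<beta> \<pi> (Suc j)) * s j)"
    using assms by (intro sum.cong) (auto simp: L2)
  also have "\<dots> = (\<Sum>j<d. \<Sum>k<m. ov (cumw E \<beta> \<alpha> k) (cumw E \<beta> \<alpha> (Suc k)) (cumw E \<beta> \<pi> j) (cumw E \<beta> \<pi> (Suc j)) * s j)"
    by (rule sum.swap)
  also have "\<dots> = (\<Sum>j<d. s j * ov 0 (cumw E \<beta> \<alpha> m) (cumw E \<beta> \<pi> j) (cumw E \<beta> \<pi> (Suc j)))"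
  proof (rule sum.cong)
    fix j
    have "(\<Sum>k<m. ov (cumw E \<beta> \<alpha> k) (cumw E \<beta> \<alpha> (Suc k)) (cumw E \<beta> \<pi> j) (cumw E \<beta> \<pi> (Suc j)) * s j)
        = (\<Sum>k<m. ov (cumw E \<beta> \<alpha> k) (cumw E \<beta> \<alpha> (Suc k)) (cumw E \<beta> \<pi> j) (cumw E \<beta> \<pi> (Suc j))) * s j"
      by (simp add: sum_distrib_right)
    also have "\<dots> = ov (cumw E \<beta> \<alpha> 0) (cumw E \<beta> \<alpha> m) (cumw E \<beta> \<pi> j) (cumw E \<beta> \<pi> (Suc j)) * s j"
      using ov_sum[of "cumw E \<beta> \<alpha>", OF Xinc Yinc] by simp
    finally show "(\<Sum>k<m. ov (cumw E \<beta> \<alpha> k) (cumw E \<beta> \<alpha> (Suc k)) (cumw E \<beta> \<pi> j) (cumw E \<beta> \<pi> (Suc j)) * s j)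
        = s j * ov 0 (cumw E \<beta> \<alpha> m) (cumw E \<beta> \<pi> j) (cumw E \<beta> \<pi> (Suc j))" by (simp add: cumw_0)
  qed simp
  also have "\<dots> = th_curve d E \<beta> p \<pi> (cumw E \<beta> \<alpha> m)"
    by (rule L3[symmetric]) (rule cumw_nonneg)
  finally show ?thesis by simp
qed

lemma s_mono: "j \<le> j' \<Longrightarrow> j' < d \<Longrightarrow> s j' \<le> s j"
proof (induction j' rule: dec_induct)
  case base then show ?case by simp
next
  case (step n)
  then have "s (Suc n) \<le> s n" using bo by (simp add: is_beta_order_def)
  then show ?case using step by simp
qed

lemma rowsum:
  assumes "Suc i \<le> d"
  shows "(\<Sum>j<d. ov (cumw E \<beta> \<alpha> i) (cumw E \<beta> \<alpha> (Suc i)) (cumw E \<beta> \<pi> j) (cumw E \<beta> \<pi> (Suc j))) = gibbs_w E \<beta> (\<alpha> i)"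
proof -
  have "(\<Sum>j<d. ov (cumw E \<beta> \<alpha> i) (cumw E \<beta> \<alpha> (Suc i)) (cumw E \<beta> \<pi> j) (cumw E \<beta> \<pi> (Suc j)))
      = (\<Sum>j<d. ov (cumw E \<beta> \<pi> j) (cumw E \<beta> \<pi> (Suc j)) (cumw E \<beta> \<alpha> i) (cumw E \<beta> \<alpha> (Suc i)))"
    by (simp add: ov_sym)
  also have "\<dots> = ov (cumw E \<beta> \<pi> 0) (cumw E \<beta> \<pi> d) (cumw E \<beta> \<alpha> i) (cumw E \<beta> \<alpha> (Suc i))"
    by (rule ov_sum) (rule Yinc, rule Xinc)
  also have "cumw E \<beta> \<pi> d = cumw E \<beta> \<alpha> d" using cumw_full[OF pperm] cumw_full[OF aperm] by simp
  also have "cumw E \<beta> \<alpha> (Suc i) \<le> cumw E \<beta> \<alpha> d" using assms by (rule cumw_mono)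
  then have "ov (cumw E \<beta> \<pi> 0) (cumw E \<beta> \<alpha> d) (cumw E \<beta> \<alpha> i) (cumw E \<beta> \<alpha> (Suc i)) = cumw E \<beta> \<alpha> (Suc i) - cumw E \<beta> \<alpha> i"
    using Xinc[of i] cumw_nonneg[of E \<beta> \<alpha> i]
    by (simp add: ov_def cumw_0 max_def min_def)
  finally show ?thesis by (simp add: cumw_Suc)
qed

lemma L6: "is_beta_order d E \<beta> pa \<alpha>"
  unfolding is_beta_order_def
proof (intro conjI allI impI)
  show "is_perm d \<alpha>" by (rule aperm)
  fix i assume si: "Suc i < d"
  define a where "a j = ov (cumw E \<beta> \<alpha> i) (cumw E \<beta> \<alpha> (Suc i)) (cumw E \<beta> \<pi> j) (cumw E \<beta> \<pi> (Suc j))" for j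
  define b where "b j = ov (cumw E \<beta> \<alpha> (Suc i)) (cumw E \<beta> \<alpha> (Suc (Suc i))) (cumw E \<beta> \<pi> j) (cumw E \<beta> \<pi> (Suc j))" for j
  have A: "(\<Sum>j<d. a j) = gibbs_w E \<beta> (\<alpha> i)" unfolding a_def using si by (intro rowsum) simp
  have B: "(\<Sum>j<d. b j) = gibbs_w E \<beta> (\<alpha> (Suc i))" unfolding b_def using si by (intro rowsum) simp
  have pai: "pa (\<alpha> i) = (\<Sum>j<d. a j * s j)" unfolding a_def using si by (simp add: L2)
  have paSi: "pa (\<alpha> (Suc i)) = (\<Sum>j<d. b j * s j)" unfolding b_def using si by (simp add: L2)
  have key: "0 \<le> (\<Sum>j<d. \<Sum>j'<d. a j * b j' * (s j - s j'))"
  proof (intro sum_nonneg)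
    fix j j' assume j: "j \<in> {..<d}" and j': "j' \<in> {..<d}"
    show "0 \<le> a j * b j' * (s j - s j')"
    proof (cases "a j > 0 \<and> b j' > 0")
      case True
      then have "cumw E \<beta> \<pi> j < cumw E \<beta> \<alpha> (Suc i)" "cumw E \<beta> \<alpha> (Suc i) < cumw E \<beta> \<pi> (Suc j')"
        unfolding a_def b_def ov_def by auto
      then have "cumw E \<beta> \<pi> j < cumw E \<beta> \<pi> (Suc j')" by simp
      then have "j \<le> j'" using cumw_mono[of "Suc j'" j E \<beta> \<pi>] by fastforce
      then have "s j' \<le> s j" using j' by (intro s_mono) auto
      then show ?thesis using True by simp
    next
      case False
      moreover have "a j \<ge> 0" "b j' \<ge> 0" unfolding a_def b_def by (rule ov_nonneg)+
      ultimately have "a j = 0 \<or> b j' = 0" by linarith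
      then show ?thesis by auto
    qed
  qed
  have "(\<Sum>j<d. \<Sum>j'<d. a j * b j' * (s j - s j'))
      = (\<Sum>j<d. a j * s j) * (\<Sum>j'<d. b j') - (\<Sum>j<d. a j) * (\<Sum>j'<d. b j' * s j')"
  proof -
    have h1: "(\<Sum>j<d. a j * s j) * (\<Sum>j'<d. b j') = (\<Sum>j<d. \<Sum>j'<d. a j * b j' * s j)"
      by (simp add: sum_product mult_ac, rule sum.swap)
    have h2: "(\<Sum>j<d. a j) * (\<Sum>j'<d. b j' * s j') = (\<Sum>j<d. \<Sum>j'<d. a j * b j' * s j')"
      by (simp add: sum_product mult_ac)
    show ?thesis unfolding h1 h2
      by (simp add: right_diff_distrib sum_subtractf)
  qed
  with key have ineq: "(\<Sum>j<d. a j) * (\<Sum>j'<d. b j' * s j') \<le> (\<Sum>j<d. a j * s j) * (\<Sum>j'<d. b j')"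
    by simp
  have ga: "gibbs_w E \<beta> (\<alpha> i) > 0" "gibbs_w E \<beta> (\<alpha> (Suc i)) > 0" by (rule g_pos)+
  have ex: "exp (\<beta> * E k) = 1 / gibbs_w E \<beta> k" for k
    by (simp add: gibbs_w_def exp_minus divide_inverse)
  let ?A = "gibbs_w E \<beta> (\<alpha> i)" and ?B = "gibbs_w E \<beta> (\<alpha> (Suc i))"
  have "(\<Sum>j<d. b j * s j) * ?A \<le> (\<Sum>j<d. a j * s j) * ?B"
    using ineq unfolding A B by (simp add: mult.commute)
  then have "(\<Sum>j<d. b j * s j) * ?A / (?A * ?B) \<le> (\<Sum>j<d. a j * s j) * ?B / (?A * ?B)"
    by (rule divide_right_mono) (use ga in simp)
  then have "(\<Sum>j<d. b j * s j) / ?B \<le> (\<Sum>j<d. a j * s j) / ?A"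
    using ga by simp
  then show "pa (\<alpha> (Suc i)) * exp (\<beta> * E (\<alpha> (Suc i))) \<le> pa (\<alpha> i) * exp (\<beta> * E (\<alpha> i))"
    unfolding pai paSi ex[of "\<alpha> i"] ex[of "\<alpha> (Suc i)"] by simp
qed

end

theorem lemma2:
  fixes d :: nat and E :: "nat \<Rightarrow> real" and \<beta> :: real
    and p :: "nat \<Rightarrow> real" and \<pi> \<alpha> :: "nat \<Rightarrow> nat"
  assumes "\<beta> > 0"
    and "prob_vec d p"
    and "is_beta_order d E \<beta> p \<pi>"
    and "is_perm d \<alpha>"
  shows "is_beta_order d E \<beta> (mat_apply d (beta_perm_matrix d E \<beta> \<pi> \<alpha>) p) \<alpha>
       \<and> \<not> (\<exists>q. prob_vec d q \<and> is_beta_order d E \<beta> q \<alpha>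
               \<and> (\<exists>i<d. q i \<noteq> mat_apply d (beta_perm_matrix d E \<beta> \<pi> \<alpha>) p i)
               \<and> th_majorizes d E \<beta> p q
               \<and> th_majorizes d E \<beta> q (mat_apply d (beta_perm_matrix d E \<beta> \<pi> \<alpha>) p))"
proof -
  let ?pa = "mat_apply d (beta_perm_matrix d E \<beta> \<pi> \<alpha>) p"
  have bpa: "is_beta_order d E \<beta> ?pa \<alpha>" by (rule L6[OF assms(3,4)])
  have "\<not> (\<exists>q. prob_vec d q \<and> is_beta_order d E \<beta> q \<alpha>
               \<and> (\<exists>i<d. q i \<noteq> ?pa i)
               \<and> th_majorizes d E \<beta> p q
               \<and> th_majorizes d E \<beta> q ?pa)"
  proof
    assume "\<exists>q. prob_vec d q \<and> is_beta_order d E \<beta> q \<alpha>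
               \<and> (\<exists>i<d. q i \<noteq> ?pa i)
               \<and> th_majorizes d E \<beta> p q
               \<and> th_majorizes d E \<beta> q ?pa"
    then obtain q i where bq: "is_beta_order d E \<beta> q \<alpha>" and i: "i < d" "q i \<noteq> ?pa i"
      and m1: "th_majorizes d E \<beta> p q" and m2: "th_majorizes d E \<beta> q ?pa" by blast
    have eqs: "(\<Sum>k<m. q (\<alpha> k)) = (\<Sum>k<m. ?pa (\<alpha> k))" if "m \<le> d" for m
    proof -
      let ?x = "cumw E \<beta> \<alpha> m"
      have xr: "0 \<le> ?x \<and> ?x \<le> (\<Sum>i<d. gibbs_w E \<beta> i)"
        using cumw_nonneg cumw_mono[OF that, of E \<beta> \<alpha>] cumw_full[OF assms(4)] by simp
      have "th_curve d E \<beta> q \<alpha> ?x \<le> th_curve d E \<beta> p \<pi> ?x"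
        using m1 assms(3) bq xr unfolding th_majorizes_def by blast
      moreover have "th_curve d E \<beta> ?pa \<alpha> ?x \<le> th_curve d E \<beta> q \<alpha> ?x"
        using m2 bq bpa xr unfolding th_majorizes_def by blast
      ultimately show ?thesis
        using curve_break[OF assms(4) that, of E \<beta> q] curve_break[OF assms(4) that, of E \<beta> ?pa]
          L5[OF assms(3,4) that] by simp
    qed
    have "q (\<alpha> k) = ?pa (\<alpha> k)" if "k < d" for k
      using eqs[of "Suc k"] eqs[of k] that by simp
    moreover obtain k where "k < d" "i = \<alpha> k"
      using assms(4) i(1) unfolding is_perm_def bij_betw_def by auto
    ultimately show False using i(2) by simp
  qed
  with bpa show ?thesis by blast
qed

end
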